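(* Let $(\sigma,b,g_0,g_1)$ be admissible parameters. If condition (2.e) below holds, then condition (2.d) below holds.
   Context: Let $E$, $U_0$, $U_1$ be separable topological spaces whose topologies are defined by complete metrics, and let $\pi,\mu_0,\mu_1$ be $\sigma$-finite Borel measures on $E,U_0,U_1$. $\mathbb{R}_+=[0,\infty)$. Parameters $(\sigma,b,g_0,g_1)$ are admissible if: $b:\mathbb{R}_+\to\mathbb{R}$ is continuous with $b(0)\ge0$; $\sigma:\mathbb{R}_+\times E\to\mathbb{R}$ is Borel with $\sigma(0,u)=0$; $g_0:\mathbb{R}_+\times U_0\to\mathbb{R}$ is Borel with $g_0(0,u)=0$ and $g_0(x,u)+x\ge0$ for $x>0$; $g_1:\mathbb{R}_+\times U_1\to\mathbb{R}$ is Borel with $g_1(x,u)+x\ge0$ for $x\ge0$. Let $l_0(x,y,u)=g_0(x,u)-g_0(y,u)$. (2.d): for each $m\ge1$ there is a nonnegative nondecreasing function $\rho_m$ on $\mathbb{R}_+$ with $\int_{0+}\rho_m(z)^{-2}dz=\infty$, $\int_E|\sigma(x,u)-\sigma(y,u)|^2\pi(du)\le\rho_m(|x-y|)^2$, and $\int_{U_0}\mu_0(du)\int_0^1\frac{l_0(x,y,u)^2(1-t)1_{\{|l_0(x,y,u)|\le n\}}}{\rho_m(|(x-y)+t\,l_0(x,y,u)|)^2}dt\le c(m,n)$ for every $n\ge1$ and $0\le x,y\le m$, with constants $c(m,n)\ge0$. (2.e): for each $u\in U_0$ the function $x\mapsto g_0(x,u)$ is nondecreasing, and for each $m\ge1$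 there is a nonnegative nondecreasing function $\rho_m$ on $\mathbb{R}_+$ with $\int_{0+}\rho_m(z)^{-2}dz=\infty$ and $\int_E|\sigma(x,u)-\sigma(y,u)|^2\pi(du)+\int_{U_0}|l_0(x,y,u)|\wedge|l_0(x,y,u)|^2\mu_0(du)\le\rho_m(|x-y|)^2$ for all $0\le x,y\le m$. *)

theory Defs
  imports "HOL-Analysis.Analysis"
begin

text \<open>Osgood-type condition: the integral of rho(z)^(-2) near 0+ diverges
  (with the convention 1/0 = infinity, realised in ennreal).\<close>
definition osgood :: "(real \<Rightarrow> real) \<Rightarrow> bool" where
  "osgood \<rho> \<longleftrightarrow> (\<forall>\<epsilon>>0. (\<integral>\<^sup>+ z. indicator {0<..\<epsilon>} z * inverse (ennreal ((\<rho> z)\<^sup>2)) \<partial>lborel) = \<infinity>)"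

definition rate_fun :: "(real \<Rightarrow> real) \<Rightarrow> bool" where
  "rate_fun \<rho> \<longleftrightarrow> (\<forall>z\<ge>0. \<rho> z \<ge> 0) \<and> mono_on {0..} \<rho> \<and> osgood \<rho>"

definition admissible ::
  "('e::polish_space) measure \<Rightarrow> ('u0::polish_space) measure \<Rightarrow> ('u1::polish_space) measure \<Rightarrow>
   (real \<Rightarrow> 'e \<Rightarrow> real) \<Rightarrow> (real \<Rightarrow> real) \<Rightarrow> (real \<Rightarrow> 'u0 \<Rightarrow> real) \<Rightarrow> (real \<Rightarrow> 'u1 \<Rightarrow> real) \<Rightarrow> bool"
where
  "admissible \<pi> \<mu>0 \<mu>1 \<sigma> b g0 g1 \<longleftrightarrow>
     sets \<pi> = sets borel \<and> sigma_finite_measure \<pi> \<and>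
     sets \<mu>0 = sets borel \<and> sigma_finite_measure \<mu>0 \<and>
     sets \<mu>1 = sets borel \<and> sigma_finite_measure \<mu>1 \<and>
     continuous_on {0..} b \<and> b 0 \<ge> 0 \<and>
     (\<lambda>(x,u). \<sigma> x u) \<in> borel_measurable (restrict_space borel ({0..} \<times> UNIV)) \<and>
     (\<forall>u. \<sigma> 0 u = 0) \<and>
     (\<lambda>(x,u). g0 x u) \<in> borel_measurable (restrict_space borel ({0..} \<times> UNIV)) \<and>
     (\<forall>u. g0 0 u = 0) \<and> (\<forall>x>0. \<forall>u. g0 x u + x \<ge> 0) \<and>
     (\<lambda>(x,u). g1 x u) \<in> borel_measurable (restrict_space borel ({0..} \<times> UNIV)) \<and>
     (\<forall>x\<ge>0. \<forall>u. g1 x u + x \<ge> 0)"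

definition l0 :: "(real \<Rightarrow> 'u \<Rightarrow> real) \<Rightarrow> real \<Rightarrow> real \<Rightarrow> 'u \<Rightarrow> real" where
  "l0 g0 x y u = g0 x u - g0 y u"

definition cond_2d ::
  "'e measure \<Rightarrow> 'u0 measure \<Rightarrow> (real \<Rightarrow> 'e \<Rightarrow> real) \<Rightarrow> (real \<Rightarrow> 'u0 \<Rightarrow> real) \<Rightarrow> bool"
where
  "cond_2d \<pi> \<mu>0 \<sigma> g0 \<longleftrightarrow>
    (\<forall>m::nat\<ge>1. \<exists>\<rho>. rate_fun \<rho> \<and>
       (\<forall>x y. 0 \<le> x \<and> x \<le> real m \<and> 0 \<le> y \<and> y \<le> real m \<longrightarrow>
          (\<integral>\<^sup>+ u. ennreal ((\<sigma> x u - \<sigma> y u)\<^sup>2) \<partial>\<pi>) \<le> ennreal ((\<rho> \<bar>x - y\<bar>)\<^sup>2)) \<and>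
       (\<forall>n::nat\<ge>1. \<exists>c\<ge>0. \<forall>x y. 0 \<le> x \<and> x \<le> real m \<and> 0 \<le> y \<and> y \<le> real m \<longrightarrow>
          (\<integral>\<^sup>+ u. (\<integral>\<^sup>+ t. indicator {0..1} t *
              (ennreal ((l0 g0 x y u)\<^sup>2 * (1 - t) * indicator {v. \<bar>v\<bar> \<le> real n} (l0 g0 x y u))
               / ennreal ((\<rho> \<bar>(x - y) + t * l0 g0 x y u\<bar>)\<^sup>2)) \<partial>lborel) \<partial>\<mu>0)
          \<le> ennreal c))"

definition cond_2e ::
  "'e measure \<Rightarrow> 'u0 measure \<Rightarrow> (real \<Rightarrow> 'e \<Rightarrow> real) \<Rightarrow> (real \<Rightarrow> 'u0 \<Rightarrow> real) \<Rightarrow> bool"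
where
  "cond_2e \<pi> \<mu>0 \<sigma> g0 \<longleftrightarrow>
    (\<forall>u. mono_on {0..} (\<lambda>x. g0 x u)) \<and>
    (\<forall>m::nat\<ge>1. \<exists>\<rho>. rate_fun \<rho> \<and>
       (\<forall>x y. 0 \<le> x \<and> x \<le> real m \<and> 0 \<le> y \<and> y \<le> real m \<longrightarrow>
          (\<integral>\<^sup>+ u. ennreal ((\<sigma> x u - \<sigma> y u)\<^sup>2) \<partial>\<pi>)
          + (\<integral>\<^sup>+ u. ennreal (min \<bar>l0 g0 x y u\<bar> ((l0 g0 x y u)\<^sup>2)) \<partial>\<mu>0)
          \<le> ennreal ((\<rho> \<bar>x - y\<bar>)\<^sup>2)))"

end

theory Submission
  imports Defs
begin

lemma num_bound:
  fixes l t :: real and n :: nat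
  assumes "n \<ge> 1" "0 \<le> t" "t \<le> 1"
  shows "l\<^sup>2 * (1 - t) * indicator {v. \<bar>v\<bar> \<le> real n} l \<le> real n * min \<bar>l\<bar> (l\<^sup>2)"
proof (cases "\<bar>l\<bar> \<le> real n")
  case False thus ?thesis by simp
next
  case True
  have a: "l\<^sup>2 * (1 - t) \<le> l\<^sup>2" using assms by (simp add: mult_left_le)
  have sq: "l\<^sup>2 = \<bar>l\<bar> * \<bar>l\<bar>" by (simp add: power2_eq_square abs_mult_self_eq)
  have "l\<^sup>2 \<le> real n * min \<bar>l\<bar> (l\<^sup>2)"
  proof (cases "\<bar>l\<bar> \<le> 1")
    case True
    hence "\<bar>l\<bar> * \<bar>l\<bar> \<le> \<bar>l\<bar>" using mult_left_le[of "\<bar>l\<bar>" "\<bar>l\<bar>"] by simp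
    hence "min \<bar>l\<bar> (l\<^sup>2) = l\<^sup>2" using sq by simp
    moreover have "l\<^sup>2 \<le> real n * l\<^sup>2" using assms(1) by (simp add: mult_le_cancel_right1)
    ultimately show ?thesis by simp
  next
    case False
    hence "\<bar>l\<bar> \<le> \<bar>l\<bar> * \<bar>l\<bar>" using mult_right_mono[of 1 "\<bar>l\<bar>" "\<bar>l\<bar>"] by simp
    hence "min \<bar>l\<bar> (l\<^sup>2) = \<bar>l\<bar>" using sq by simp
    moreover have "\<bar>l\<bar> * \<bar>l\<bar> \<le> real n * \<bar>l\<bar>" using \<open>\<bar>l\<bar> \<le> real n\<close> mult_right_mono[of "\<bar>l\<bar>" "real n" "\<bar>l\<bar>"] by simp
    ultimately show ?thesis using sq by simp
  qed
  thus ?thesis using a True by simp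
qed

lemma inv_anti: "0 \<le> (a::real) \<Longrightarrow> a \<le> b \<Longrightarrow> inverse (ennreal b) \<le> inverse (ennreal a)"
proof (cases "a = 0")
  case True thus ?thesis by simp
next
  case False
  assume "0 \<le> a" "a \<le> b"
  hence "0 < a" "0 < b" using False by auto
  thus ?thesis using \<open>a \<le> b\<close> by (simp add: inverse_ennreal le_imp_inverse_le)
qed

lemma abs_grow:
  fixes d l t :: real
  assumes t: "0 \<le> t" and dl: "d * l \<ge> 0"
  shows "\<bar>d\<bar> \<le> \<bar>d + t * l\<bar>"
proof -
  consider "d > 0" | "d = 0" | "d < 0" by linarith
  thus ?thesis
  proof cases
    case 1
    hence "l \<ge> 0" using dl zero_le_mult_iff[of d l] by linarith
    hence "t * l \<ge> 0" using t by simp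
    thus ?thesis using 1 by simp
  next
    case 2 thus ?thesis by simp
  next
    case 3
    hence "l \<le> 0" using dl zero_le_mult_iff[of d l] by linarith
    hence "t * l \<le> 0" using t by (simp add: mult_nonneg_nonpos)
    thus ?thesis using 3 by simp
  qed
qed

lemma point_bound:
  fixes \<rho> :: "real \<Rightarrow> real" and d l t :: real and n :: nat
  assumes r: "rate_fun \<rho>" and n: "n \<ge> 1" and t: "0 \<le> t" "t \<le> 1" and dl: "d * l \<ge> 0"
  shows "ennreal (l\<^sup>2 * (1 - t) * indicator {v. \<bar>v\<bar> \<le> real n} l) / ennreal ((\<rho> \<bar>d + t * l\<bar>)\<^sup>2)
     \<le> ennreal (real n * min \<bar>l\<bar> (l\<^sup>2)) * inverse (ennreal ((\<rho> \<bar>d\<bar>)\<^sup>2))"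
proof -
  have pos: "\<And>z. z \<ge> 0 \<Longrightarrow> \<rho> z \<ge> 0" and mo: "mono_on {0..} \<rho>" using r by (auto simp: rate_fun_def)
  have "\<rho> \<bar>d\<bar> \<le> \<rho> \<bar>d + t * l\<bar>" using mo abs_grow[OF t(1) dl] by (auto intro: mono_onD)
  hence sq: "(\<rho> \<bar>d\<bar>)\<^sup>2 \<le> (\<rho> \<bar>d + t * l\<bar>)\<^sup>2" using pos by (simp add: power_mono)
  have nb: "ennreal (l\<^sup>2 * (1 - t) * indicator {v. \<bar>v\<bar> \<le> real n} l) \<le> ennreal (real n * min \<bar>l\<bar> (l\<^sup>2))"
    using num_bound[OF n t, of l] by (rule ennreal_leI)
  have ib: "inverse (ennreal ((\<rho> \<bar>d + t * l\<bar>)\<^sup>2)) \<le> inverse (ennreal ((\<rho> \<bar>d\<bar>)\<^sup>2))"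
    by (rule inv_anti[OF _ sq]) simp
  show ?thesis unfolding divide_ennreal_def
    by (rule mult_mono[OF nb ib]) auto
qed

lemma meas_sec:
  fixes g0 :: "real \<Rightarrow> 'u::polish_space \<Rightarrow> real" and M :: "'u measure"
  assumes "(\<lambda>(x,u). g0 x u) \<in> borel_measurable (restrict_space borel ({0..} \<times> UNIV))"
    and "sets M = sets borel" and "x \<ge> 0"
  shows "(\<lambda>u. g0 x u) \<in> borel_measurable M"
proof -
  have "Pair x \<in> measurable (borel::'u measure) (borel \<Otimes>\<^sub>M borel)"
    by (rule measurable_Pair1') simp
  hence "Pair x \<in> measurable (borel::'u measure) borel"
    by (simp add: borel_prod)
  hence "Pair x \<in> measurable (borel::'u measure) (restrict_space borel ({0..} \<times> UNIV))"
    using assms(3) by (intro measurable_restrict_space2) auto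
  from measurable_comp[OF this assms(1)] have "(\<lambda>u. g0 x u) \<in> borel_measurable borel"
    by (simp add: o_def)
  thus ?thesis using measurable_cong_sets[OF assms(2) refl] by metis
qed

theorem proposition2p4:
  fixes \<pi> :: "'e::polish_space measure" and \<mu>0 :: "'u0::polish_space measure"
    and \<mu>1 :: "'u1::polish_space measure"
    and \<sigma> :: "real \<Rightarrow> 'e \<Rightarrow> real" and b :: "real \<Rightarrow> real"
    and g0 :: "real \<Rightarrow> 'u0 \<Rightarrow> real" and g1 :: "real \<Rightarrow> 'u1 \<Rightarrow> real"
  assumes "admissible \<pi> \<mu>0 \<mu>1 \<sigma> b g0 g1"
    and "cond_2e \<pi> \<mu>0 \<sigma> g0"
  shows "cond_2d \<pi> \<mu>0 \<sigma> g0"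
proof -
  have gm: "(\<lambda>(x,u). g0 x u) \<in> borel_measurable (restrict_space borel ({0..} \<times> UNIV))"
    and sm: "sets \<mu>0 = sets borel" using assms(1) by (auto simp: admissible_def)
  have mono_g: "\<And>u. mono_on {0..} (\<lambda>x. g0 x u)" using assms(2) by (simp add: cond_2e_def)
  have H: "\<forall>m::nat\<ge>1. \<exists>\<rho>. rate_fun \<rho> \<and>
       (\<forall>x y. 0 \<le> x \<and> x \<le> real m \<and> 0 \<le> y \<and> y \<le> real m \<longrightarrow>
          (\<integral>\<^sup>+ u. ennreal ((\<sigma> x u - \<sigma> y u)\<^sup>2) \<partial>\<pi>)
          + (\<integral>\<^sup>+ u. ennreal (min \<bar>l0 g0 x y u\<bar> ((l0 g0 x y u)\<^sup>2)) \<partial>\<mu>0)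
          \<le> ennreal ((\<rho> \<bar>x - y\<bar>)\<^sup>2))" using assms(2) by (simp add: cond_2e_def)
  show ?thesis unfolding cond_2d_def
  proof (intro allI impI)
    fix m :: nat assume m: "m \<ge> 1"
    obtain \<rho> where r: "rate_fun \<rho>" and B: "\<And>x y. 0 \<le> x \<and> x \<le> real m \<and> 0 \<le> y \<and> y \<le> real m \<Longrightarrow>
          (\<integral>\<^sup>+ u. ennreal ((\<sigma> x u - \<sigma> y u)\<^sup>2) \<partial>\<pi>)
          + (\<integral>\<^sup>+ u. ennreal (min \<bar>l0 g0 x y u\<bar> ((l0 g0 x y u)\<^sup>2)) \<partial>\<mu>0)
          \<le> ennreal ((\<rho> \<bar>x - y\<bar>)\<^sup>2)" using H m by blast
    show "\<exists>\<rho>. rate_fun \<rho> \<and>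
       (\<forall>x y. 0 \<le> x \<and> x \<le> real m \<and> 0 \<le> y \<and> y \<le> real m \<longrightarrow>
          (\<integral>\<^sup>+ u. ennreal ((\<sigma> x u - \<sigma> y u)\<^sup>2) \<partial>\<pi>) \<le> ennreal ((\<rho> \<bar>x - y\<bar>)\<^sup>2)) \<and>
       (\<forall>n::nat\<ge>1. \<exists>c\<ge>0. \<forall>x y. 0 \<le> x \<and> x \<le> real m \<and> 0 \<le> y \<and> y \<le> real m \<longrightarrow>
          (\<integral>\<^sup>+ u. (\<integral>\<^sup>+ t. indicator {0..1} t *
              (ennreal ((l0 g0 x y u)\<^sup>2 * (1 - t) * indicator {v. \<bar>v\<bar> \<le> real n} (l0 g0 x y u))
               / ennreal ((\<rho> \<bar>(x - y) + t * l0 g0 x y u\<bar>)\<^sup>2)) \<partial>lborel) \<partial>\<mu>0)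
          \<le> ennreal c)"
    proof (intro exI[of _ \<rho>] conjI allI impI)
      show "rate_fun \<rho>" by (rule r)
    next
      fix x y assume xy: "0 \<le> x \<and> x \<le> real m \<and> 0 \<le> y \<and> y \<le> real m"
      show "(\<integral>\<^sup>+ u. ennreal ((\<sigma> x u - \<sigma> y u)\<^sup>2) \<partial>\<pi>) \<le> ennreal ((\<rho> \<bar>x - y\<bar>)\<^sup>2)"
        by (rule order_trans[OF _ B[OF xy]]) (rule add_increasing2, simp_all)
    next
      fix n :: nat assume n: "n \<ge> 1"
      show "\<exists>c\<ge>0. \<forall>x y. 0 \<le> x \<and> x \<le> real m \<and> 0 \<le> y \<and> y \<le> real m \<longrightarrow>
          (\<integral>\<^sup>+ u. (\<integral>\<^sup>+ t. indicator {0..1} t *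
              (ennreal ((l0 g0 x y u)\<^sup>2 * (1 - t) * indicator {v. \<bar>v\<bar> \<le> real n} (l0 g0 x y u))
               / ennreal ((\<rho> \<bar>(x - y) + t * l0 g0 x y u\<bar>)\<^sup>2)) \<partial>lborel) \<partial>\<mu>0)
          \<le> ennreal c"
      proof (intro exI[of _ "real n"] conjI allI impI)
        show "0 \<le> real n" by simp
      next
        fix x y assume xy: "0 \<le> x \<and> x \<le> real m \<and> 0 \<le> y \<and> y \<le> real m"
        define Inv where "Inv = inverse (ennreal ((\<rho> \<bar>x - y\<bar>)\<^sup>2))"
        define M where "M u = ennreal (min \<bar>l0 g0 x y u\<bar> ((l0 g0 x y u)\<^sup>2))" for u
        have dl: "(x - y) * l0 g0 x y u \<ge> 0" for u
        proof (cases "y \<le> x")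
          case True
          hence "g0 y u \<le> g0 x u" using mono_g[of u] xy by (auto intro: mono_onD)
          thus ?thesis using True by (simp add: l0_def)
        next
          case False
          hence "g0 x u \<le> g0 y u" using mono_g[of u] xy by (auto intro: mono_onD)
          thus ?thesis using False by (simp add: l0_def mult_nonpos_nonpos)
        qed
        have inner: "(\<integral>\<^sup>+ t. indicator {0..1} t *
              (ennreal ((l0 g0 x y u)\<^sup>2 * (1 - t) * indicator {v. \<bar>v\<bar> \<le> real n} (l0 g0 x y u))
               / ennreal ((\<rho> \<bar>(x - y) + t * l0 g0 x y u\<bar>)\<^sup>2)) \<partial>lborel)
             \<le> ennreal (real n) * M u * Inv" for u
        proof -
          have "(\<integral>\<^sup>+ t. indicator {0..1} t *
              (ennreal ((l0 g0 x y u)\<^sup>2 * (1 - t) * indicator {v. \<bar>v\<bar> \<le> real n} (l0 g0 x y u))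
               / ennreal ((\<rho> \<bar>(x - y) + t * l0 g0 x y u\<bar>)\<^sup>2)) \<partial>lborel)
             \<le> (\<integral>\<^sup>+ t. (ennreal (real n) * M u * Inv) * indicator {0..1::real} t \<partial>lborel)"
          proof (rule nn_integral_mono)
            fix t :: real
            show "indicator {0..1} t *
              (ennreal ((l0 g0 x y u)\<^sup>2 * (1 - t) * indicator {v. \<bar>v\<bar> \<le> real n} (l0 g0 x y u))
               / ennreal ((\<rho> \<bar>(x - y) + t * l0 g0 x y u\<bar>)\<^sup>2))
              \<le> (ennreal (real n) * M u * Inv) * indicator {0..1} t"
            proof (cases "t \<in> {0..1}")
              case True
              hence "0 \<le> t" "t \<le> 1" by auto
              from point_bound[OF r n this dl[of u]] show ?thesis using True
                by (simp add: M_def Inv_def ennreal_mult)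
            qed simp
          qed
          also have "\<dots> = ennreal (real n) * M u * Inv"
            by (subst nn_integral_cmult_indicator) auto
          finally show ?thesis .
        qed
        have mx: "(\<lambda>u. g0 x u) \<in> borel_measurable \<mu>0" and my: "(\<lambda>u. g0 y u) \<in> borel_measurable \<mu>0"
          using meas_sec[OF gm sm] xy by auto
        have mM: "M \<in> borel_measurable \<mu>0"
          unfolding M_def l0_def using mx my by measurable
        have "(\<integral>\<^sup>+ u. ennreal (min \<bar>l0 g0 x y u\<bar> ((l0 g0 x y u)\<^sup>2)) \<partial>\<mu>0) \<le> ennreal ((\<rho> \<bar>x - y\<bar>)\<^sup>2)"
          by (rule order_trans[OF _ B[OF xy]]) (rule add_increasing, simp_all)
        hence IM: "integral\<^sup>N \<mu>0 M \<le> ennreal ((\<rho> \<bar>x - y\<bar>)\<^sup>2)" by (simp add: M_def[abs_def])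
        have key: "integral\<^sup>N \<mu>0 M * Inv \<le> 1"
        proof (cases "(\<rho> \<bar>x - y\<bar>)\<^sup>2 = 0")
          case True
          hence "integral\<^sup>N \<mu>0 M = 0" using IM by simp
          thus ?thesis by simp
        next
          case False
          hence p: "(\<rho> \<bar>x - y\<bar>)\<^sup>2 > 0" by (simp add: less_le)
          have "integral\<^sup>N \<mu>0 M * Inv \<le> ennreal ((\<rho> \<bar>x - y\<bar>)\<^sup>2) * Inv"
            using IM by (rule mult_right_mono) simp
          also have "\<dots> = 1" using p
            by (simp add: Inv_def inverse_ennreal ennreal_mult[symmetric])
          finally show ?thesis .
        qed
        have "(\<integral>\<^sup>+ u. (\<integral>\<^sup>+ t. indicator {0..1} t *
              (ennreal ((l0 g0 x y u)\<^sup>2 * (1 - t) * indicator {v. \<bar>v\<bar> \<le> real n} (l0 g0 x y u))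
               / ennreal ((\<rho> \<bar>(x - y) + t * l0 g0 x y u\<bar>)\<^sup>2)) \<partial>lborel) \<partial>\<mu>0)
            \<le> (\<integral>\<^sup>+ u. ennreal (real n) * M u * Inv \<partial>\<mu>0)"
          by (rule nn_integral_mono) (rule inner)
        also have "\<dots> = ennreal (real n) * (integral\<^sup>N \<mu>0 M * Inv)"
          using mM by (simp add: mult.assoc nn_integral_cmult nn_integral_multc)
        also have "\<dots> \<le> ennreal (real n) * 1"
          using key by (rule mult_left_mono) simp
        finally show "(\<integral>\<^sup>+ u. (\<integral>\<^sup>+ t. indicator {0..1} t *
              (ennreal ((l0 g0 x y u)\<^sup>2 * (1 - t) * indicator {v. \<bar>v\<bar> \<le> real n} (l0 g0 x y u))
               / ennreal ((\<rho> \<bar>(x - y) + t * l0 g0 x y u\<bar>)\<^sup>2)) \<partial>lborel) \<partial>\<mu>0)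
            \<le> ennreal (real n)" by simp
      qed
    qed
  qed
qed
end
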